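(* Let $P$ be a probability measure on $(\Omega,\mathcal A)$ and $\delta\in(\tfrac12,1)$. Then the C-measure generated by the C-class $\bar T(P,\delta)=\{A\in\bar{\mathcal A}:\bar P(A)\ge\delta\}$ equals $\bar P$, i.e. $\bar M_{\bar T(P,\delta)}(A)=\bar P(A)$ for all $A\in\bar{\mathcal A}$.
   Context: Let $(\Omega,\mathcal A)$ be a measurable space. For $n\ge1$, $\mathcal A^n$ is the product $\sigma$-algebra on $\Omega^n$; the extended event space is $\bar{\mathcal A}=\bigcup_{n\ge1}\mathcal A^n$, events tagged by their level $n$ (written $A^{(n)}$). For $k\ge1$, $(\Omega^n)^k$ is identified with $\Omega^{nk}$ and $(\mathcal A^n)^k$ with $\mathcal A^{nk}$. For a probability measure $P$ on $\mathcal A$, $P^n$ is its $n$-fold product, and $\bar P(A^{(n)})=P^n(A^{(n)})$. For $A^{(n)}\in\mathcal A^n$, an interval $I\subseteq[0,1]$ and $k\in\mathbb N^+$, $S(A^{(n)},I,k)=\{(\omega_1,\dots,\omega_k)\in(\Omega^n)^k:\frac1k\sum_{i=1}^k\chi_{A^{(n)}}(\omega_i)\in I\}$. A class $\bar{\mathbf C}\subseteq\bar{\mathcal A}$ is a C-class if each component $\mathcal C^{(n)}=\bar{\mathbf C}\cap\mathcal A^n$ contains $\Omega^n$, is closed under supersets within $\mathcal A^n$, and contains no two disjoint events. "$S(A,I,k)\in\bar{\mathbf C}$ definitively" means there is $k_0$ with $S(A,I,k)\in\bar{\mathbf C}$ for all $k>k_0$. The C-measure of a C-class is $\bar M_{\bar{\mathbf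 C}}(A)=\sup\{\sigma\in[0,1]: S(A,[\sigma,1],k)\in\bar{\mathbf C}\text{ definitively}\}$. *)

theory Defs
  imports "HOL-Probability.Probability"
begin

text \<open>Level-n product space: \<Omega>^n is modelled as PiM {..<n} (\<lambda>_. M)
  (extensional functions on {..<n}).  An event of the extended event space
  tagged with its level n is a pair (n, A) with n \<ge> 1 and A a measurable
  set of the level-n product.\<close>

definition prodM :: "'a measure \<Rightarrow> nat \<Rightarrow> (nat \<Rightarrow> 'a) measure" where
  "prodM M n = PiM {..<n} (\<lambda>_. M)"

definition ext_events :: "'a measure \<Rightarrow> (nat \<times> (nat \<Rightarrow> 'a) set) set" where
  "ext_events M = {(n, A). n \<ge> 1 \<and> A \<in> sets (prodM M n)}"

text \<open>Identification of (\<Omega>^n)^k with \<Omega>^(nk): the i-th block (i < k) of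
  \<omega> \<in> \<Omega>^(nk) is the element of \<Omega>^n given by j \<mapsto> \<omega> (i*n + j).\<close>

definition block :: "nat \<Rightarrow> nat \<Rightarrow> (nat \<Rightarrow> 'a) \<Rightarrow> (nat \<Rightarrow> 'a)" where
  "block n i \<omega> = restrict (\<lambda>j. \<omega> (i * n + j)) {..<n}"

definition S_set :: "'a measure \<Rightarrow> nat \<Rightarrow> (nat \<Rightarrow> 'a) set \<Rightarrow> real set \<Rightarrow> nat
    \<Rightarrow> (nat \<Rightarrow> 'a) set" where
  "S_set M n A I k = {\<omega> \<in> space (prodM M (n * k)).
      real (card {i. i < k \<and> block n i \<omega> \<in> A}) / real k \<in> I}"

definition C_class :: "'a measure \<Rightarrow> (nat \<times> (nat \<Rightarrow> 'a) set) set \<Rightarrow> bool" where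
  "C_class M C \<longleftrightarrow> C \<subseteq> ext_events M \<and>
     (\<forall>n\<ge>1. (n, space (prodM M n)) \<in> C) \<and>
     (\<forall>n A B. (n, A) \<in> C \<longrightarrow> A \<subseteq> B \<longrightarrow> B \<in> sets (prodM M n) \<longrightarrow> (n, B) \<in> C) \<and>
     (\<forall>n A B. (n, A) \<in> C \<longrightarrow> (n, B) \<in> C \<longrightarrow> A \<inter> B \<noteq> {})"

definition C_measure :: "'a measure \<Rightarrow> (nat \<times> (nat \<Rightarrow> 'a) set) set \<Rightarrow> nat
    \<Rightarrow> (nat \<Rightarrow> 'a) set \<Rightarrow> real" where
  "C_measure M C n A = Sup {\<sigma> \<in> {0..1}.
      \<exists>k0. \<forall>k>k0. (n * k, S_set M n A {\<sigma>..1} k) \<in> C}"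

definition T_class :: "'a measure \<Rightarrow> real \<Rightarrow> (nat \<times> (nat \<Rightarrow> 'a) set) set" where
  "T_class M \<delta> = {(n, A) \<in> ext_events M. measure (prodM M n) A \<ge> \<delta>}"

end

theory Submission imports Defs "HOL-Real_Asymp.Real_Asymp" begin

lemma indep_coords:
  assumes M: "prob_space M" and fin: "finite I" and ne: "I \<noteq> {}"
  shows "prob_space.indep_vars (PiM I (\<lambda>_. M)) (\<lambda>_. M) (\<lambda>i \<omega>. \<omega> i) I"
proof -
  interpret P: prob_space "PiM I (\<lambda>_. M)" by (rule prob_space_PiM) (use M in auto)
  show ?thesis
  proof -
    note False = ne
    have "distr (PiM I (\<lambda>_. M)) (PiM I (\<lambda>i. M)) (\<lambda>x. \<lambda>i\<in>I. x i)
        = distr (PiM I (\<lambda>_. M)) (PiM I (\<lambda>i. M)) (\<lambda>x. x)"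
      by (rule distr_cong) (auto simp: space_PiM PiE_def extensional_restrict)
    also have "\<dots> = PiM I (\<lambda>i. distr (PiM I (\<lambda>_. M)) M (\<lambda>x. x i))"
      unfolding distr_id
      by (rule PiM_cong[OF refl], subst distr_PiM_component[of I "\<lambda>_. M"]) (use M in auto)
    finally show ?thesis
      by (subst P.indep_vars_iff_distr_eq_PiM'[OF False]) auto
  qed
qed

lemma block_indep:
  assumes M: "prob_space M" and A: "A \<in> sets (prodM M n)" and n: "n \<ge> 1" and k: "k \<ge> 1"
  shows "prob_space.indep_vars (prodM M (n*k)) (\<lambda>_. borel)
           (\<lambda>i \<omega>. indicator A (block n i \<omega>) :: real) {..<k}"
proof -
  interpret P: prob_space "prodM M (n*k)" unfolding prodM_def by (rule prob_space_PiM) (use M in auto)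
  have 1: "P.indep_vars (\<lambda>_. M) (\<lambda>j \<omega>. \<omega> j) {..<n*k}"
    unfolding prodM_def by (rule indep_coords[OF M]) (use n k in \<open>auto simp: lessThan_empty_iff\<close>)
  define K where "K i = {i*n..<i*n+n}" for i
  have Ksub: "K i \<subseteq> {..<n*k}" if "i \<in> {..<k}" for i
  proof -
    have "i*n+n \<le> k*n" using that by (metis Suc_leI add.commute lessThan_iff mult_Suc mult_le_mono1)
    then show ?thesis by (auto simp: K_def mult.commute)
  qed
  have disj: "disjoint_family_on K {..<k}"
  unfolding disjoint_family_on_def proof (intro ballI impI)
    fix i j assume "i \<in> {..<k}" "j \<in> {..<k}" "i \<noteq> j"
    show "K i \<inter> K j = {}"
    proof (cases "i < j")
      case True
      then have "i*n+n \<le> j*n" by (metis Suc_leI add.commute mult_Suc mult_le_mono1)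
      then show ?thesis by (auto simp: K_def)
    next
      case False
      then have "j*n+n \<le> i*n" using \<open>i \<noteq> j\<close> by (metis Suc_leI add.commute mult_Suc mult_le_mono1 nat_neq_iff)
      then show ?thesis by (auto simp: K_def)
    qed
  qed
  have 2: "P.indep_vars (\<lambda>i. PiM (K i) (\<lambda>_. M)) (\<lambda>i \<omega>. restrict (\<lambda>j. \<omega> j) (K i)) {..<k}"
    by (rule P.indep_vars_restrict[OF 1 Ksub disj])
  define Y where "Y i f = (indicator A (\<lambda>j\<in>{..<n}. f (i*n+j)) :: real)" for i and f :: "nat \<Rightarrow> 'a"
  have Ymeas: "Y i \<in> measurable (PiM (K i) (\<lambda>_. M)) borel" for i
  proof -
    have "(\<lambda>f. \<lambda>j\<in>{..<n}. f (i*n+j)) \<in> measurable (PiM (K i) (\<lambda>_. M)) (prodM M n)"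
      unfolding prodM_def
      by (rule measurable_restrict) (auto simp: K_def intro!: measurable_component_singleton)
    then show ?thesis unfolding Y_def using A by (intro borel_measurable_indicator') auto
  qed
  have 3: "P.indep_vars (\<lambda>_. borel) (\<lambda>i \<omega>. Y i (restrict (\<lambda>j. \<omega> j) (K i))) {..<k}"
    by (rule P.indep_vars_compose2[OF 2 Ymeas])
  show ?thesis
  proof (subst P.indep_vars_cong[OF refl _ refl])
    show "(\<lambda>\<omega>. indicator A (block n i \<omega>)) = (\<lambda>\<omega>. Y i (restrict (\<lambda>j. \<omega> j) (K i)))" for i
      unfolding Y_def block_def by (auto simp: K_def restrict_def intro!: ext arg_cong[where f="indicator A"])
  qed (rule 3)
qed

lemma block_meas:
  assumes "i < k"
  shows "block n i \<in> measurable (prodM M (n*k)) (prodM M n)"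
proof -
  have "i*n+j < n*k" if "j < n" for j
  proof -
    have "i*n+n \<le> k*n" using assms by (metis Suc_leI add.commute mult_Suc mult_le_mono1)
    then show ?thesis using that by (simp add: mult.commute)
  qed
  then show ?thesis unfolding block_def prodM_def
    by (intro measurable_restrict) (auto intro!: measurable_component_singleton)
qed

lemma block_distr:
  assumes M: "prob_space M" and "i < k"
  shows "distr (prodM M (n*k)) (prodM M n) (block n i) = prodM M n"
proof -
  have "i*n+j < n*k" if "j < n" for j
  proof -
    have "i*n+n \<le> k*n" using assms by (metis Suc_leI add.commute mult_Suc mult_le_mono1)
    then show ?thesis using that by (simp add: mult.commute)
  qed
  then have "distr (PiM {..<n*k} (\<lambda>_. M)) (PiM {..<n} (\<lambda>j. (\<lambda>_. M) (i*n+j))) (\<lambda>\<omega>. \<lambda>j\<in>{..<n}. \<omega> (i*n+j))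
      = PiM {..<n} (\<lambda>j. (\<lambda>_. M) (i*n+j))"
    by (intro distr_PiM_reindex) (auto simp: M inj_on_def)
  then show ?thesis unfolding prodM_def block_def by simp
qed

lemma block_expect:
  assumes M: "prob_space M" and A: "A \<in> sets (prodM M n)" and "i < k"
  shows "integral\<^sup>L (prodM M (n*k)) (\<lambda>\<omega>. indicator A (block n i \<omega>) :: real) = measure (prodM M n) A"
proof -
  interpret Q: prob_space "prodM M n" unfolding prodM_def by (rule prob_space_PiM) (use M in auto)
  have "integral\<^sup>L (prodM M (n*k)) (\<lambda>\<omega>. indicator A (block n i \<omega>) :: real)
      = integral\<^sup>L (distr (prodM M (n*k)) (prodM M n) (block n i)) (indicator A)"
    by (rule integral_distr[symmetric]) (use A block_meas[OF \<open>i < k\<close>] in auto)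
  also have "\<dots> = measure (prodM M n) A"
    unfolding block_distr[OF M \<open>i < k\<close>] using A by (simp add: Q.emeasure_eq_measure)
  finally show ?thesis .
qed

lemma tails:
  assumes M: "prob_space M" and A: "A \<in> sets (prodM M n)" and n: "n \<ge> 1" and k: "k \<ge> 1"
    and e: "\<epsilon> \<ge> 0"
  shows "measure (prodM M (n*k)) {\<omega>\<in>space (prodM M (n*k)).
           real k * measure (prodM M n) A + real k * \<epsilon> \<le> (\<Sum>i<k. indicator A (block n i \<omega>))}
         \<le> exp (-2 * real k * \<epsilon>\<^sup>2)"
    and "measure (prodM M (n*k)) {\<omega>\<in>space (prodM M (n*k)).
           (\<Sum>i<k. indicator A (block n i \<omega>)) \<le> real k * measure (prodM M n) A - real k * \<epsilon>}
         \<le> exp (-2 * real k * \<epsilon>\<^sup>2)"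
proof -
  interpret P: prob_space "prodM M (n*k)" unfolding prodM_def by (rule prob_space_PiM) (use M in auto)
  have ind: "P.indep_vars (\<lambda>_. borel) (\<lambda>i \<omega>. indicator A (block n i \<omega>) :: real) {..<k}"
    by (rule block_indep[OF M A n k])
  interpret H: Hoeffding_ineq "prodM M (n*k)" "{..<k}" "\<lambda>i \<omega>. indicator A (block n i \<omega>) :: real"
     "\<lambda>_. 0" "\<lambda>_. 1" "real k * measure (prodM M n) A"
  proof unfold_locales
    show "AE x in prodM M (n * k). indicator A (block n i x) \<in> {0..1::real}" for i
      by (auto simp: indicator_def)
    show "real k * measure (prodM M n) A \<equiv>
        \<Sum>i\<in>{..<k}. P.expectation (\<lambda>\<omega>. indicator A (block n i \<omega>))"
      by (simp add: block_expect[OF M A])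
  qed (auto simp: ind)
  have pos: "(\<Sum>i\<in>{..<k}. ((1::real) - 0)\<^sup>2) > 0" using k by simp
  have ee: "exp (- 2 * (real k * \<epsilon>)\<^sup>2 / (\<Sum>i\<in>{..<k}. ((1::real) - 0)\<^sup>2)) = exp (-2 * real k * \<epsilon>\<^sup>2)"
    using k by (simp add: power2_eq_square)
  have ke: "real k * \<epsilon> \<ge> 0" using e by simp
  show "measure (prodM M (n*k)) {\<omega>\<in>space (prodM M (n*k)).
           real k * measure (prodM M n) A + real k * \<epsilon> \<le> (\<Sum>i<k. indicator A (block n i \<omega>))}
         \<le> exp (-2 * real k * \<epsilon>\<^sup>2)"
    using H.Hoeffding_ineq_ge[OF ke pos] unfolding ee by simp
  show "measure (prodM M (n*k)) {\<omega>\<in>space (prodM M (n*k)).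
           (\<Sum>i<k. indicator A (block n i \<omega>)) \<le> real k * measure (prodM M n) A - real k * \<epsilon>}
         \<le> exp (-2 * real k * \<epsilon>\<^sup>2)"
    using H.Hoeffding_ineq_le[OF ke pos] unfolding ee by simp
qed

lemma exp_small:
  assumes "c > 0" "e > 0"
  shows "\<exists>k0. \<forall>k>k0. exp (-2 * real k * c) < e"
proof -
  have "(\<lambda>k. exp (-2 * real k * c)) \<longlonglongrightarrow> 0" using assms(1) by real_asymp
  then have "eventually (\<lambda>k. exp (-2 * real k * c) < e) sequentially"
    using assms(2) by (rule order_tendstoD)
  then obtain N where "\<forall>k\<ge>N. exp (-2 * real k * c) < e" by (auto simp: eventually_sequentially)
  then show ?thesis by (intro exI[of _ N]) auto
qed

lemma S_set_eq:
  assumes k: "k \<ge> 1"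
  shows "S_set M n A {\<sigma>..1} k = {\<omega>\<in>space (prodM M (n*k)). real k * \<sigma> \<le> (\<Sum>i<k. indicator A (block n i \<omega>))}"
proof -
  have cnt: "(\<Sum>i<k. indicator A (block n i \<omega>)) = real (card {i. i < k \<and> block n i \<omega> \<in> A})" for \<omega>
  proof -
    have "(\<Sum>i<k. indicator A (block n i \<omega>) :: real) = (\<Sum>i\<in>{i. i < k \<and> block n i \<omega> \<in> A}. 1)"
      by (rule sum.mono_neutral_cong_right) (auto simp: indicator_def)
    then show ?thesis by simp
  qed
  have le: "card {i. i < k \<and> block n i \<omega> \<in> A} \<le> k" for \<omega>
    using card_mono[of "{..<k}" "{i. i < k \<and> block n i \<omega> \<in> A}"] by auto
  have "real (card {i. i < k \<and> block n i \<omega> \<in> A}) / real k \<in> {\<sigma>..1} \<longleftrightarrow>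
        real k * \<sigma> \<le> real (card {i. i < k \<and> block n i \<omega> \<in> A})" for \<omega>
    using k le[of \<omega>] by (auto simp: field_simps)
  then show ?thesis unfolding S_set_def cnt by auto
qed

theorem mainTheorem4:
  fixes M :: "'a measure" and \<delta> :: real and n :: nat and A :: "(nat \<Rightarrow> 'a) set"
  assumes "prob_space M"
    and "1/2 < \<delta>" and "\<delta> < 1"
    and "(n, A) \<in> ext_events M"
  shows "C_measure M (T_class M \<delta>) n A = measure (prodM M n) A"
proof -
  note M = assms(1)
  have n: "n \<ge> 1" and A: "A \<in> sets (prodM M n)" using assms(4) by (auto simp: ext_events_def)
  define p where "p = measure (prodM M n) A"
  interpret Q: prob_space "prodM M n" unfolding prodM_def by (rule prob_space_PiM) (use M in auto)
  have p01: "0 \<le> p" "p \<le> 1" unfolding p_def by auto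
  define X where "X k \<omega> = (\<Sum>i<k. indicator A (block n i \<omega>) :: real)" for k \<omega>
  have Xmeas: "X k \<in> borel_measurable (prodM M (n*k))" if "k \<ge> 1" for k
  proof -
    have "(\<lambda>\<omega>. indicator A (block n i \<omega>) :: real) \<in> borel_measurable (prodM M (n*k))" if "i < k" for i
      by (rule measurable_compose[OF block_meas[OF that] borel_measurable_indicator[OF A]])
    then show ?thesis unfolding X_def by (intro borel_measurable_sum) auto
  qed
  have memT: "(n*k, S_set M n A {\<sigma>..1} k) \<in> T_class M \<delta> \<longleftrightarrow>
      \<delta> \<le> measure (prodM M (n*k)) {\<omega>\<in>space (prodM M (n*k)). real k * \<sigma> \<le> X k \<omega>}"
    if k: "k \<ge> 1" for k \<sigma>
  proof -
    have "{\<omega>\<in>space (prodM M (n*k)). real k * \<sigma> \<le> X k \<omega>} \<in> sets (prodM M (n*k))"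
      using Xmeas[OF k] by measurable
    moreover have "n * k \<ge> 1" using n k by simp
    ultimately show ?thesis unfolding T_class_def ext_events_def S_set_eq[OF k] X_def by auto
  qed
  define Sg where "Sg = {\<sigma> \<in> {0..1}. \<exists>k0. \<forall>k>k0. (n * k, S_set M n A {\<sigma>..1} k) \<in> T_class M \<delta>}"
  have zero: "0 \<in> Sg"
  proof -
    have "(n * k, S_set M n A {0..1} k) \<in> T_class M \<delta>" if "k > 0" for k
    proof -
      interpret P: prob_space "prodM M (n*k)" unfolding prodM_def by (rule prob_space_PiM) (use M in auto)
      have "X k \<omega> \<ge> 0" for \<omega> unfolding X_def by (intro sum_nonneg) auto
      then have "{\<omega>\<in>space (prodM M (n*k)). real k * 0 \<le> X k \<omega>} = space (prodM M (n*k))" by auto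
      then show ?thesis using that assms(3) P.prob_space by (subst memT) auto
    qed
    then show ?thesis unfolding Sg_def by auto
  qed
  have low: "\<sigma> \<in> Sg" if s: "0 \<le> \<sigma>" "\<sigma> < p" for \<sigma>
  proof -
    obtain k0 where k0: "\<forall>k>k0. exp (-2 * real k * (p - \<sigma>)\<^sup>2) < 1 - \<delta>"
      using exp_small[of "(p - \<sigma>)\<^sup>2" "1 - \<delta>"] s assms(3) by auto
    have "(n * k, S_set M n A {\<sigma>..1} k) \<in> T_class M \<delta>" if kk: "k > k0" for k
    proof -
      have k: "k \<ge> 1" using kk by simp
      interpret P: prob_space "prodM M (n*k)" unfolding prodM_def by (rule prob_space_PiM) (use M in auto)
      let ?S = "{\<omega>\<in>space (prodM M (n*k)). real k * \<sigma> \<le> X k \<omega>}"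
      let ?T = "{\<omega>\<in>space (prodM M (n*k)). X k \<omega> \<le> real k * p - real k * (p - \<sigma>)}"
      have Tm: "?T \<in> sets (prodM M (n*k))" using Xmeas[OF k] by measurable
      have "space (prodM M (n*k)) \<subseteq> ?S \<union> ?T" by (auto simp: algebra_simps)
      have Sm: "?S \<in> sets (prodM M (n*k))" using Xmeas[OF k] by measurable
      have "1 = P.prob (space (prodM M (n*k)))" using P.prob_space by simp
      also have "\<dots> \<le> P.prob (?S \<union> ?T)"
        by (rule P.finite_measure_mono) (use \<open>space _ \<subseteq> _\<close> Sm Tm in auto)
      also have "\<dots> \<le> P.prob ?S + P.prob ?T"
        by (rule measure_Un_le) (use Sm Tm in auto)
      finally have "1 \<le> P.prob ?S + P.prob ?T" .
      moreover have "P.prob ?T \<le> exp (-2 * real k * (p - \<sigma>)\<^sup>2)"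
        using tails(2)[OF M A n k, of "p - \<sigma>"] s unfolding X_def p_def by simp
      ultimately show ?thesis using k0 kk by (subst memT[OF k]) auto
    qed
    then show ?thesis unfolding Sg_def using s p01 by auto
  qed
  have up: "\<sigma> \<le> p" if sS: "\<sigma> \<in> Sg" for \<sigma>
  proof (rule ccontr)
    assume "\<not> \<sigma> \<le> p"
    then have s: "\<sigma> > p" by simp
    obtain k0 where k0: "\<forall>k>k0. (n * k, S_set M n A {\<sigma>..1} k) \<in> T_class M \<delta>"
      using sS unfolding Sg_def by auto
    obtain k1 where k1: "\<forall>k>k1. exp (-2 * real k * (\<sigma> - p)\<^sup>2) < \<delta>"
      using exp_small[of "(\<sigma> - p)\<^sup>2" "\<delta>"] s assms(2) by auto
    define k where "k = Suc (max k0 k1)"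
    have k: "k \<ge> 1" "k > k0" "k > k1" unfolding k_def by auto
    have "\<delta> \<le> measure (prodM M (n*k)) {\<omega>\<in>space (prodM M (n*k)). real k * \<sigma> \<le> X k \<omega>}"
      using k0 k memT[OF k(1)] by auto
    also have "\<dots> \<le> exp (-2 * real k * (\<sigma> - p)\<^sup>2)"
      using tails(1)[OF M A n k(1), of "\<sigma> - p"] s unfolding X_def p_def by (simp add: algebra_simps)
    also have "\<dots> < \<delta>" using k1 k by auto
    finally show False by simp
  qed
  have "Sup Sg = p"
  proof (rule cSup_eq_non_empty)
    show "Sg \<noteq> {}" using zero by auto
    show "\<And>x. x \<in> Sg \<Longrightarrow> x \<le> p" by (rule up)
    fix y assume y: "\<And>x. x \<in> Sg \<Longrightarrow> x \<le> y"
    show "p \<le> y"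
    proof (rule ccontr)
      assume "\<not> p \<le> y"
      then have yp: "y < p" by simp
      have "0 \<le> y" using y[OF zero] .
      then have "(y + p) / 2 \<in> Sg" using yp by (intro low) auto
      from y[OF this] yp show False by simp
    qed
  qed
  then show ?thesis unfolding C_measure_def Sg_def p_def by simp
qed

end
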